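(* Let $(\Gamma,M)$ be an E-GCM graph with Coxeter group $W$ acting on $V$ by the quasi-standard geometric representation. Fix $i\ne j$ in $I_n$ and a positive integer $k$. If $m_{ij}=\infty$, then $(s_is_j)^k.\alpha_i=a\alpha_i+b\alpha_j$ and $s_j(s_is_j)^k.\alpha_i=c\alpha_i+d\alpha_j$ with $a,b,c,d>0$. Now suppose $m_{ij}<\infty$. If $2k<m_{ij}$, then $(s_is_j)^k.\alpha_i=a\alpha_i+b\alpha_j$ with $a\ge0$, $b>0$; moreover this is a multiple of $\alpha_j$ if and only if $m_{ij}$ is odd and $k=(m_{ij}-1)/2$, in which case $(s_is_j)^k.\alpha_i=\frac{-M_{ji}}{2\cos(\pi/m_{ij})}\alpha_j$. If $2k<m_{ij}-1$, then $s_j(s_is_j)^k.\alpha_i=a\alpha_i+b\alpha_j$ with $a>0$, $b\ge0$; moreover this is a multiple of $\alpha_i$ if and only if $m_{ij}$ is even and $k=(m_{ij}-2)/2$, in which case $s_j(s_is_j)^k.\alpha_i=\alpha_i$.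
   Context: E-GCM $M=(M_{ij})_{i,j\in I_n}$: real, $M_{ii}=2$, $M_{ij}\le0$ ($i\ne j$), $M_{ij}\ne0\iff M_{ji}\ne0$, nonzero $M_{ij}M_{ji}$ either $\ge4$ or $=4\cos^2(\pi/m)$ with $m\ge3$ integer. $W$: generators $s_i$, $s_i^2=e$, $(s_is_j)^{m_{ij}}=e$, where $m_{ij}=k$ if $M_{ij}M_{ji}=4\cos^2(\pi/k)$ for an integer $k\ge2$ (so $m_{ij}=2$ iff $M_{ij}M_{ji}=0$) and $m_{ij}=\infty$ if $M_{ij}M_{ji}\ge4$. Quasi-standard geometric representation: $V$ real vector space with basis $(\alpha_i)$, $s_i.v=v-2B(\alpha_i,v)\alpha_i$ with $B(\alpha_i,\alpha_j)=\tfrac12M_{ij}$, i.e. $s_i.\alpha_j=\alpha_j-M_{ij}\alpha_i$. *)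

theory Defs
  imports Complex_Main "HOL-Library.Extended_Nat"
begin

definition egcm :: "('i::finite \<Rightarrow> 'i \<Rightarrow> real) \<Rightarrow> bool" where
  "egcm M \<longleftrightarrow>
     (\<forall>i. M i i = 2) \<and>
     (\<forall>i j. i \<noteq> j \<longrightarrow> M i j \<le> 0) \<and>
     (\<forall>i j. M i j \<noteq> 0 \<longleftrightarrow> M j i \<noteq> 0) \<and>
     (\<forall>i j. M i j * M j i \<noteq> 0 \<longrightarrow>
        (M i j * M j i \<ge> 4 \<or>
         (\<exists>m::nat. m \<ge> 3 \<and> M i j * M j i = 4 * (cos (pi / real m))\<^sup>2)))"

definition coxm :: "('i \<Rightarrow> 'i \<Rightarrow> real) \<Rightarrow> 'i \<Rightarrow> 'i \<Rightarrow> enat" where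
  "coxm M i j =
     (if M i j * M j i \<ge> 4 then \<infinity>
      else enat (LEAST k::nat. k \<ge> 2 \<and> M i j * M j i = 4 * (cos (pi / real k))\<^sup>2))"

text \<open>V = real vector space with basis (alpha_i); vectors are coordinate
functions 'i => real, and alpha i is the i-th basis vector.\<close>

definition alpha :: "'i \<Rightarrow> ('i \<Rightarrow> real)" where
  "alpha i = (\<lambda>l. if l = i then 1 else 0)"

text \<open>Quasi-standard geometric representation: s_i.v = v - 2B(alpha_i,v) alpha_i,
with B(alpha_i,alpha_j) = M_ij/2, i.e. s_i.alpha_j = alpha_j - M_ij alpha_i.\<close>

definition refl :: "('i::finite \<Rightarrow> 'i \<Rightarrow> real) \<Rightarrow> 'i \<Rightarrow> ('i \<Rightarrow> real) \<Rightarrow> ('i \<Rightarrow> real)" where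
  "refl M i v = (\<lambda>l. v l - (\<Sum>h\<in>UNIV. M i h * v h) * alpha i l)"

end

theory Submission
  imports Defs
begin
lemma sum_alpha: "(\<Sum>h\<in>UNIV. f h * alpha k h) = (f (k::'a::finite) :: real)"
proof -
  have "(\<Sum>h\<in>UNIV. f h * alpha k h) = (\<Sum>h\<in>UNIV. if h = k then f k else 0)" by (rule sum.cong) (auto simp: alpha_def)
  then show ?thesis by simp
qed
lemma sumlin: "(\<Sum>h\<in>UNIV. M i h * (a * alpha i h + b * alpha j h)) = a * M i i + b * M (i::'a::finite) j"
proof -
  have "(\<Sum>h\<in>UNIV. M i h * (a * alpha i h + b * alpha j h)) = (\<Sum>h\<in>UNIV. (a * M i h) * alpha i h) + (\<Sum>h\<in>UNIV. (b * M i h) * alpha j h)"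
    by (simp add: sum.distrib algebra_simps)
  then show ?thesis by (simp add: sum_alpha)
qed
lemma refl_i: "refl M i (\<lambda>l. a * alpha i l + b * alpha j l) = (\<lambda>l. (a - (a * M i i + b * M i j)) * alpha i l + b * alpha j l)"
  unfolding refl_def sumlin by (auto simp: algebra_simps)
lemma refl_j: "refl M j (\<lambda>l. a * alpha i l + b * alpha j l) = (\<lambda>l. a * alpha i l + (b - (b * M j j + a * M j i)) * alpha j l)"
proof -
  have "(\<Sum>h\<in>UNIV. M j h * (a * alpha i h + b * alpha j h)) = (\<Sum>h\<in>UNIV. M j h * (b * alpha j h + a * alpha i h))"
    by (simp add: add.commute)
  also have "\<dots> = b * M j j + a * M j i" by (rule sumlin)
  finally show ?thesis unfolding refl_def by (auto simp: algebra_simps)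
qed

fun useq :: "real \<Rightarrow> nat \<Rightarrow> real" where
  "useq t 0 = 0"
| "useq t (Suc 0) = 1"
| "useq t (Suc (Suc n)) = 2 * t * useq t (Suc n) - useq t n"

lemma orbit:
  assumes "M i i = 2" "M j j = 2" "- M i j * lam = 2 * t" "- M j i = 2 * t * lam"
  shows "((refl M i \<circ> refl M j) ^^ k) (alpha i)
     = (\<lambda>l. useq t (2*k+1) * alpha i l + (lam * useq t (2*k)) * alpha (j::'a::finite) l)"
proof (induction k)
  case 0
  then show ?case by simp
next
  case (Suc k)
  have h: "useq t (2*k+2) = 2*t*useq t (2*k+1) - useq t (2*k)" by (simp add: numeral_eq_Suc)
  have h2: "M j i = -(2*t*lam)" using assms(4) by simp
  have e1: "lam * useq t (2 * k) - (lam * useq t (2 * k) * M j j + useq t (2 * k + 1) * M j i)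
      = lam * useq t (2*k+2)"
    unfolding h h2 assms(2) by (simp add: algebra_simps)
  have e2: "useq t (2 * k + 1) - (useq t (2 * k + 1) * M i i + lam * useq t (2*k+2) * M i j)
      = useq t (2*k+3)"
  proof -
    have h0: "useq t (2*k+3) = 2 * t * useq t (2*k+2) - useq t (2*k+1)"
      by (simp add: numeral_eq_Suc)
    have h3: "M i j * lam = -2*t" using assms(3) by simp
    have "lam * useq t (2*k+2) * M i j = (M i j * lam) * useq t (2*k+2)" by (simp only: ac_simps)
    also have "\<dots> = -2*t*useq t (2*k+2)" unfolding h3 ..
    finally have "lam * useq t (2*k+2) * M i j = -2*t*useq t (2*k+2)" .
    then show ?thesis using assms(1) h0 by simp
  qed
  have "((refl M i \<circ> refl M j) ^^ Suc k) (alpha i) = refl M i (refl M j (((refl M i \<circ> refl M j) ^^ k) (alpha i)))"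
    by simp
  also have "\<dots> = (\<lambda>l. useq t (2*k+3) * alpha i l + (lam * useq t (2*k+2)) * alpha j l)"
    unfolding Suc.IH refl_j e1 refl_i e2 ..
  moreover have "2*Suc k + 1 = 2*k+3" "2*Suc k = 2*k+2" by simp_all
  ultimately show ?case by (simp only:)
qed

lemma orbit2:
  assumes "M i i = 2" "M j j = 2" "- M i j * lam = 2 * t" "- M j i = 2 * t * lam"
  shows "refl M j (((refl M i \<circ> refl M j) ^^ k) (alpha i))
     = (\<lambda>l. useq t (2*k+1) * alpha i l + (lam * useq t (2*k+2)) * alpha (j::'a::finite) l)"
proof -
  have h: "useq t (2*k+2) = 2*t*useq t (2*k+1) - useq t (2*k)" by (simp add: numeral_eq_Suc)
  have h2: "M j i = -(2*t*lam)" using assms(4) by simp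
  have e1: "lam * useq t (2 * k) - (lam * useq t (2 * k) * M j j + useq t (2 * k + 1) * M j i)
      = lam * useq t (2*k+2)"
    unfolding h h2 assms(2) by (simp add: algebra_simps)
  show ?thesis unfolding orbit[OF assms] refl_j e1 ..
qed

lemma useq_ge1: "(t::real) \<ge> 1 \<Longrightarrow> useq t n \<ge> 0 \<and> useq t (Suc n) - useq t n \<ge> 1"
proof (induction n)
  case 0 then show ?case by simp
next
  case (Suc n)
  then have "2 * useq t (Suc n) \<le> (2*t) * useq t (Suc n)"
    by (intro mult_right_mono) auto
  moreover have "useq t (Suc (Suc n)) = 2*t*useq t (Suc n) - useq t n" by simp
  ultimately show ?case using Suc by linarith
qed

lemma useq_inf_pos: "(t::real) \<ge> 1 \<Longrightarrow> n \<ge> 1 \<Longrightarrow> useq t n > 0"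
proof -
  assume "t \<ge> 1" "n \<ge> 1"
  then obtain n' where "n = Suc n'" by (cases n) auto
  with useq_ge1[OF \<open>t \<ge> 1\<close>, of n'] show ?thesis by auto
qed

lemma useq_sin: "sin x \<noteq> 0 \<Longrightarrow> useq (cos x) n = sin (real n * x) / sin x"
proof (induction "cos x" n rule: useq.induct)
  case 1 then show ?case by simp
next
  case 2 then show ?case by simp
next
  case (3 n)
  have "sin ((real n + 2) * x) = 2 * cos x * sin ((real n + 1) * x) - sin (real n * x)"
  proof -
    have a: "(real n + 2) * x = (real n + 1) * x + x" "real n * x = (real n + 1) * x - x"
      by (simp_all add: algebra_simps)
    show ?thesis unfolding a sin_add sin_diff by (simp add: algebra_simps)
  qed
  with 3 show ?case by (simp add: field_simps add_ac)
qed

lemma sin_pos_m: "(m::nat) \<ge> 2 \<Longrightarrow> sin (pi / real m) > 0"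
  by (rule sin_gt_zero) (auto simp: field_simps)

lemma useq_fin_pos: "(m::nat) \<ge> 2 \<Longrightarrow> 0 < n \<Longrightarrow> n < m \<Longrightarrow> useq (cos (pi / real m)) n > 0"
proof -
  assume a: "m \<ge> 2" "0 < n" "n < m"
  have s: "sin (pi / real m) > 0" using sin_pos_m a by simp
  have "sin (real n * (pi / real m)) > 0"
    using a by (intro sin_gt_zero) (auto simp: field_simps)
  then show ?thesis using s by (simp add: useq_sin)
qed

lemma useq_fin_m: "(m::nat) \<ge> 2 \<Longrightarrow> useq (cos (pi / real m)) m = 0"
proof -
  assume a: "m \<ge> 2"
  have s: "sin (pi / real m) > 0" using sin_pos_m a by simp
  have "real m * (pi / real m) = pi" using a by simp
  then show ?thesis using s by (simp add: useq_sin)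
qed

lemma useq_fin_m1: "(m::nat) \<ge> 2 \<Longrightarrow> useq (cos (pi / real m)) (m - 1) = 1"
proof -
  assume a: "m \<ge> 2"
  have s: "sin (pi / real m) > 0" using sin_pos_m a by simp
  have "real (m - 1) * (pi / real m) = pi - pi / real m" using a by (simp add: of_nat_diff field_simps)
  then show ?thesis using s by (simp add: useq_sin)
qed
theorem lemma4p2:
  fixes M :: "'i::finite \<Rightarrow> 'i \<Rightarrow> real" and i j :: 'i and k :: nat
  assumes "egcm M" and "i \<noteq> j" and "k \<ge> 1"
  shows
   "(coxm M i j = \<infinity> \<longrightarrow>
       (\<exists>a b. a > 0 \<and> b > 0 \<and>
          ((refl M i \<circ> refl M j) ^^ k) (alpha i) = (\<lambda>l. a * alpha i l + b * alpha j l)) \<and>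
       (\<exists>c d. c > 0 \<and> d > 0 \<and>
          refl M j (((refl M i \<circ> refl M j) ^^ k) (alpha i)) = (\<lambda>l. c * alpha i l + d * alpha j l)))
    \<and>
    (\<forall>m::nat. coxm M i j = enat m \<longrightarrow>
       (2 * k < m \<longrightarrow>
          (\<exists>a b. a \<ge> 0 \<and> b > 0 \<and>
             ((refl M i \<circ> refl M j) ^^ k) (alpha i) = (\<lambda>l. a * alpha i l + b * alpha j l)) \<and>
          ((\<exists>c. ((refl M i \<circ> refl M j) ^^ k) (alpha i) = (\<lambda>l. c * alpha j l))
             \<longleftrightarrow> (odd m \<and> real k = (real m - 1) / 2)) \<and>
          (odd m \<and> real k = (real m - 1) / 2 \<longrightarrow>
             ((refl M i \<circ> refl M j) ^^ k) (alpha i)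
               = (\<lambda>l. (- M j i / (2 * cos (pi / real m))) * alpha j l))) \<and>
       (2 * k < m - 1 \<longrightarrow>
          (\<exists>a b. a > 0 \<and> b \<ge> 0 \<and>
             refl M j (((refl M i \<circ> refl M j) ^^ k) (alpha i)) = (\<lambda>l. a * alpha i l + b * alpha j l)) \<and>
          ((\<exists>c. refl M j (((refl M i \<circ> refl M j) ^^ k) (alpha i)) = (\<lambda>l. c * alpha i l))
             \<longleftrightarrow> (even m \<and> real k = (real m - 2) / 2)) \<and>
          (even m \<and> real k = (real m - 2) / 2 \<longrightarrow>
             refl M j (((refl M i \<circ> refl M j) ^^ k) (alpha i)) = alpha i)))"
proof -
  have Mii: "M i i = 2" "M j j = 2" and Mneg: "M i j \<le> 0" "M j i \<le> 0"
    and nz: "M i j \<noteq> 0 \<longleftrightarrow> M j i \<noteq> 0"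
    and cls: "M i j * M j i \<noteq> 0 \<longrightarrow> (M i j * M j i \<ge> 4 \<or>
         (\<exists>m::nat. m \<ge> 3 \<and> M i j * M j i = 4 * (cos (pi / real m))\<^sup>2))"
    using assms(1,2) unfolding egcm_def by auto
  define P where "P = M i j * M j i"
  have aij: "alpha i i = 1" "alpha i j = 0" "alpha j i = 0" "alpha j j = 1"
    using assms(2) by (auto simp: alpha_def)
  define O1 where "O1 = ((refl M i \<circ> refl M j) ^^ k) (alpha i)"
  define O2 where "O2 = refl M j (((refl M i \<circ> refl M j) ^^ k) (alpha i))"
  have part1: "coxm M i j = \<infinity> \<longrightarrow>
       (\<exists>a b. a > 0 \<and> b > 0 \<and> O1 = (\<lambda>l. a * alpha i l + b * alpha j l)) \<and>
       (\<exists>c d. c > 0 \<and> d > 0 \<and> O2 = (\<lambda>l. c * alpha i l + d * alpha j l))"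
  proof
    assume "coxm M i j = \<infinity>"
    then have P4: "P \<ge> 4" unfolding coxm_def P_def by (auto split: if_splits)
    define t where "t = sqrt P / 2"
    have "2 \<le> sqrt P" using real_le_rsqrt[of 2 P] P4 by simp
    then have t1: "t \<ge> 1" unfolding t_def by simp
    have tt: "4 * t * t = P" unfolding t_def using P4 by (simp add: real_sqrt_mult_self)
    have p0: "M i j < 0" using P4 Mneg unfolding P_def by (cases "M i j = 0") auto
    define lam where "lam = 2 * t / (- M i j)"
    have c1: "- M i j * lam = 2 * t" using p0 unfolding lam_def by simp
    have c2: "- M j i = 2 * t * lam" using p0 tt unfolding lam_def P_def by (simp add: field_simps)
    have lam0: "lam > 0" using p0 t1 unfolding lam_def by (intro divide_pos_pos) auto
    have u1: "useq t (2*k+1) > 0" "useq t (2*k) > 0" "useq t (2*k+2) > 0"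
      by (rule useq_inf_pos[OF t1], use assms(3) in simp)+
    show "(\<exists>a b. a > 0 \<and> b > 0 \<and> O1 = (\<lambda>l. a * alpha i l + b * alpha j l)) \<and>
       (\<exists>c d. c > 0 \<and> d > 0 \<and> O2 = (\<lambda>l. c * alpha i l + d * alpha j l))"
    proof
      show "\<exists>a b. a > 0 \<and> b > 0 \<and> O1 = (\<lambda>l. a * alpha i l + b * alpha j l)"
        unfolding O1_def orbit[OF Mii c1 c2]
        using u1 lam0 by (intro exI[of _ "useq t (2*k+1)"] exI[of _ "lam * useq t (2*k)"] conjI mult_pos_pos refl) (assumption+)
      show "\<exists>c d. c > 0 \<and> d > 0 \<and> O2 = (\<lambda>l. c * alpha i l + d * alpha j l)"
        unfolding O2_def orbit2[OF Mii c1 c2]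
        using u1 lam0 by (intro exI[of _ "useq t (2*k+1)"] exI[of _ "lam * useq t (2*k+2)"] conjI mult_pos_pos refl) (assumption+)
    qed
  qed
  have part2: "\<forall>m::nat. coxm M i j = enat m \<longrightarrow>
       (2 * k < m \<longrightarrow>
          (\<exists>a b. a \<ge> 0 \<and> b > 0 \<and> O1 = (\<lambda>l. a * alpha i l + b * alpha j l)) \<and>
          ((\<exists>c. O1 = (\<lambda>l. c * alpha j l)) \<longleftrightarrow> (odd m \<and> real k = (real m - 1) / 2)) \<and>
          (odd m \<and> real k = (real m - 1) / 2 \<longrightarrow>
             O1 = (\<lambda>l. (- M j i / (2 * cos (pi / real m))) * alpha j l))) \<and>
       (2 * k < m - 1 \<longrightarrow>
          (\<exists>a b. a > 0 \<and> b \<ge> 0 \<and> O2 = (\<lambda>l. a * alpha i l + b * alpha j l)) \<and>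
          ((\<exists>c. O2 = (\<lambda>l. c * alpha i l)) \<longleftrightarrow> (even m \<and> real k = (real m - 2) / 2)) \<and>
          (even m \<and> real k = (real m - 2) / 2 \<longrightarrow> O2 = alpha i))"
  proof (intro allI impI)
    fix m :: nat
    assume cm: "coxm M i j = enat m"
    then have P4: "P < 4" and mdef: "m = (LEAST k::nat. k \<ge> 2 \<and> P = 4 * (cos (pi / real k))\<^sup>2)"
      unfolding coxm_def P_def by (auto split: if_splits)
    show "(2 * k < m \<longrightarrow>
          (\<exists>a b. a \<ge> 0 \<and> b > 0 \<and> O1 = (\<lambda>l. a * alpha i l + b * alpha j l)) \<and>
          ((\<exists>c. O1 = (\<lambda>l. c * alpha j l)) \<longleftrightarrow> (odd m \<and> real k = (real m - 1) / 2)) \<and>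
          (odd m \<and> real k = (real m - 1) / 2 \<longrightarrow>
             O1 = (\<lambda>l. (- M j i / (2 * cos (pi / real m))) * alpha j l))) \<and>
       (2 * k < m - 1 \<longrightarrow>
          (\<exists>a b. a > 0 \<and> b \<ge> 0 \<and> O2 = (\<lambda>l. a * alpha i l + b * alpha j l)) \<and>
          ((\<exists>c. O2 = (\<lambda>l. c * alpha i l)) \<longleftrightarrow> (even m \<and> real k = (real m - 2) / 2)) \<and>
          (even m \<and> real k = (real m - 2) / 2 \<longrightarrow> O2 = alpha i))"
    proof (cases "P = 0")
      case True
      have "m = 2" unfolding mdef using True by (intro Least_equality) auto
      then show ?thesis using assms(3) by auto
    next
      case False
      obtain m0 :: nat where m0f: "m0 \<ge> 3" "P = 4 * (cos (pi / real m0))\<^sup>2"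
      proof -
        have nP: "\<not> 4 \<le> M i j * M j i" "M i j * M j i \<noteq> 0" using P4 False unfolding P_def by simp_all
        show ?thesis using cls nP that unfolding P_def by blast
      qed
      have h0: "m0 \<ge> 2 \<and> P = 4 * (cos (pi / real m0))\<^sup>2"
        using m0f by (intro conjI; (assumption | linarith))
      have "m \<ge> 2 \<and> P = 4 * (cos (pi / real m))\<^sup>2" unfolding mdef
        using h0 by (rule LeastI)
      then have m2: "m \<ge> 2" and Pm: "P = 4 * (cos (pi / real m))\<^sup>2" by blast+
      have m3: "m \<ge> 3"
      proof (rule ccontr)
        assume "\<not> m \<ge> 3"
        then have "m = 2" using m2 by simp
        then show False using Pm False by simp
      qed
      define t where "t = cos (pi / real m)"
      have x0: "pi / real m > 0" using m3 by simp
      have "pi / real m \<le> pi / 3" using m3 by (intro divide_left_mono) auto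
      then have x1: "pi / real m < pi / 2" using pi_gt_zero by linarith
      have t0: "t > 0" unfolding t_def
        using x0 x1 by (intro cos_gt_zero_pi) auto
      have tt: "4 * t * t = P" unfolding t_def Pm by (simp add: power2_eq_square)
      have p0: "M i j < 0" using False Mneg unfolding P_def by (cases "M i j = 0") auto
      define lam where "lam = 2 * t / (- M i j)"
      have c1: "- M i j * lam = 2 * t" using p0 unfolding lam_def by simp
      have c2: "- M j i = 2 * t * lam" using p0 tt unfolding lam_def P_def by (simp add: field_simps)
      have lam0: "lam > 0" using p0 t0 unfolding lam_def by (intro divide_pos_pos) auto
      have lamv: "lam = - M j i / (2 * cos (pi / real m))" using c2 t0 unfolding t_def by simp
      have O1e: "O1 = (\<lambda>l. useq t (2*k+1) * alpha i l + (lam * useq t (2*k)) * alpha j l)"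
        unfolding O1_def by (rule orbit[OF Mii c1 c2])
      have O2e: "O2 = (\<lambda>l. useq t (2*k+1) * alpha i l + (lam * useq t (2*k+2)) * alpha j l)"
        unfolding O2_def by (rule orbit2[OF Mii c1 c2])
      have upos: "\<And>n. 0 < n \<Longrightarrow> n < m \<Longrightarrow> useq t n > 0"
        unfolding t_def using useq_fin_pos m2 by blast
      have um: "useq t m = 0" unfolding t_def using useq_fin_m m2 by blast
      have um1: "useq t (m - 1) = 1" unfolding t_def using useq_fin_m1 m2 by blast
      have oddiff: "(odd m \<and> real k = (real m - 1) / 2) \<longleftrightarrow> 2 * k + 1 = m"
      proof
        assume "odd m \<and> real k = (real m - 1) / 2"
        then have "real (2 * k + 1) = real m" by (simp add: field_simps)
        then show "2 * k + 1 = m" by (simp only: of_nat_eq_iff)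
      next
        assume "2 * k + 1 = m"
        then show "odd m \<and> real k = (real m - 1) / 2" by auto
      qed
      have eviff: "(even m \<and> real k = (real m - 2) / 2) \<longleftrightarrow> 2 * k + 2 = m"
      proof
        assume "even m \<and> real k = (real m - 2) / 2"
        then have "real (2 * k + 2) = real m" by (simp add: field_simps)
        then show "2 * k + 2 = m" by (simp only: of_nat_eq_iff)
      next
        assume "2 * k + 2 = m"
        then show "even m \<and> real k = (real m - 2) / 2" by auto
      qed
      have A: "2 * k < m \<longrightarrow>
          (\<exists>a b. a \<ge> 0 \<and> b > 0 \<and> O1 = (\<lambda>l. a * alpha i l + b * alpha j l)) \<and>
          ((\<exists>c. O1 = (\<lambda>l. c * alpha j l)) \<longleftrightarrow> (odd m \<and> real k = (real m - 1) / 2)) \<and>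
          (odd m \<and> real k = (real m - 1) / 2 \<longrightarrow>
             O1 = (\<lambda>l. (- M j i / (2 * cos (pi / real m))) * alpha j l))"
      proof
        assume km: "2 * k < m"
        have ua: "useq t (2*k+1) \<ge> 0"
        proof (cases "2*k+1 < m")
          case True then show ?thesis using upos[of "2*k+1"] by simp
        next
          case False then have "2*k+1 = m" using km by simp
          then show ?thesis using um by simp
        qed
        have ub: "useq t (2*k) > 0" using upos[of "2*k"] km assms(3) by simp
        have z: "useq t (2*k+1) = 0 \<longleftrightarrow> 2*k+1 = m"
        proof
          assume h: "useq t (2*k+1) = 0"
          show "2*k+1 = m"
          proof (rule ccontr)
            assume "2*k+1 \<noteq> m"
            then have "2*k+1 < m" using km by simp
            then show False using upos[of "2*k+1"] h by simp
          qed
        qed (use um in simp)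
        have ex: "(\<exists>c. O1 = (\<lambda>l. c * alpha j l)) \<longleftrightarrow> useq t (2*k+1) = 0"
        proof
          assume "\<exists>c. O1 = (\<lambda>l. c * alpha j l)"
          then obtain c where "O1 = (\<lambda>l. c * alpha j l)" by blast
          then have "O1 i = c * alpha j i" by simp
          then show "useq t (2*k+1) = 0" unfolding O1e using aij by simp
        next
          assume "useq t (2*k+1) = 0"
          then have "O1 = (\<lambda>l. (lam * useq t (2*k)) * alpha j l)" unfolding O1e by simp
          then show "\<exists>c. O1 = (\<lambda>l. c * alpha j l)" by blast
        qed
        have val: "2*k+1 = m \<Longrightarrow> O1 = (\<lambda>l. (- M j i / (2 * cos (pi / real m))) * alpha j l)"
        proof -
          assume h: "2*k+1 = m"
          then have "2*k = m - 1" by simp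
          then have "useq t (2*k) = 1" using um1 by simp
          moreover have "useq t (2*k+1) = 0" using h um by simp
          ultimately show ?thesis unfolding O1e lamv by simp
        qed
        show "(\<exists>a b. a \<ge> 0 \<and> b > 0 \<and> O1 = (\<lambda>l. a * alpha i l + b * alpha j l)) \<and>
          ((\<exists>c. O1 = (\<lambda>l. c * alpha j l)) \<longleftrightarrow> (odd m \<and> real k = (real m - 1) / 2)) \<and>
          (odd m \<and> real k = (real m - 1) / 2 \<longrightarrow>
             O1 = (\<lambda>l. (- M j i / (2 * cos (pi / real m))) * alpha j l))"
        proof (intro conjI)
          show "\<exists>a b. a \<ge> 0 \<and> b > 0 \<and> O1 = (\<lambda>l. a * alpha i l + b * alpha j l)"
            unfolding O1e using ua ub lam0
            by (intro exI[of _ "useq t (2*k+1)"] exI[of _ "lam * useq t (2*k)"] conjI mult_pos_pos refl) (assumption+)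
          show "(\<exists>c. O1 = (\<lambda>l. c * alpha j l)) \<longleftrightarrow> (odd m \<and> real k = (real m - 1) / 2)"
            using ex z oddiff by blast
          show "odd m \<and> real k = (real m - 1) / 2 \<longrightarrow>
             O1 = (\<lambda>l. (- M j i / (2 * cos (pi / real m))) * alpha j l)"
            using oddiff val by blast
        qed
      qed
      have B: "2 * k < m - 1 \<longrightarrow>
          (\<exists>a b. a > 0 \<and> b \<ge> 0 \<and> O2 = (\<lambda>l. a * alpha i l + b * alpha j l)) \<and>
          ((\<exists>c. O2 = (\<lambda>l. c * alpha i l)) \<longleftrightarrow> (even m \<and> real k = (real m - 2) / 2)) \<and>
          (even m \<and> real k = (real m - 2) / 2 \<longrightarrow> O2 = alpha i)"
      proof
        assume km: "2 * k < m - 1"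
        have ua: "useq t (2*k+1) > 0" using upos[of "2*k+1"] km by simp
        have ub: "useq t (2*k+2) \<ge> 0"
        proof (cases "2*k+2 < m")
          case True then show ?thesis using upos[of "2*k+2"] by simp
        next
          case False then have "2*k+2 = m" using km by simp
          then show ?thesis using um by simp
        qed
        have z: "useq t (2*k+2) = 0 \<longleftrightarrow> 2*k+2 = m"
        proof
          assume h: "useq t (2*k+2) = 0"
          show "2*k+2 = m"
          proof (rule ccontr)
            assume "2*k+2 \<noteq> m"
            then have "2*k+2 < m" using km by simp
            then show False using upos[of "2*k+2"] h by simp
          qed
        qed (use um in simp)
        have ex: "(\<exists>c. O2 = (\<lambda>l. c * alpha i l)) \<longleftrightarrow> useq t (2*k+2) = 0"
        proof
          assume "\<exists>c. O2 = (\<lambda>l. c * alpha i l)"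
          then obtain c where "O2 = (\<lambda>l. c * alpha i l)" by blast
          then have "O2 j = c * alpha i j" by simp
          then show "useq t (2*k+2) = 0" unfolding O2e using aij lam0 by simp
        next
          assume "useq t (2*k+2) = 0"
          then have "O2 = (\<lambda>l. useq t (2*k+1) * alpha i l)" unfolding O2e by simp
          then show "\<exists>c. O2 = (\<lambda>l. c * alpha i l)" by blast
        qed
        have val: "2*k+2 = m \<Longrightarrow> O2 = alpha i"
        proof -
          assume h: "2*k+2 = m"
          then have "2*k+1 = m - 1" by simp
          then have "useq t (2*k+1) = 1" using um1 by simp
          moreover have "useq t (2*k+2) = 0" using h um by simp
          ultimately show ?thesis unfolding O2e by simp
        qed
        show "(\<exists>a b. a > 0 \<and> b \<ge> 0 \<and> O2 = (\<lambda>l. a * alpha i l + b * alpha j l)) \<and>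
          ((\<exists>c. O2 = (\<lambda>l. c * alpha i l)) \<longleftrightarrow> (even m \<and> real k = (real m - 2) / 2)) \<and>
          (even m \<and> real k = (real m - 2) / 2 \<longrightarrow> O2 = alpha i)"
        proof (intro conjI)
          show "\<exists>a b. a > 0 \<and> b \<ge> 0 \<and> O2 = (\<lambda>l. a * alpha i l + b * alpha j l)"
            unfolding O2e using ua ub lam0
            by (intro exI[of _ "useq t (2*k+1)"] exI[of _ "lam * useq t (2*k+2)"] conjI mult_nonneg_nonneg refl) (assumption | simp)+
          show "(\<exists>c. O2 = (\<lambda>l. c * alpha i l)) \<longleftrightarrow> (even m \<and> real k = (real m - 2) / 2)"
            using ex z eviff by blast
          show "even m \<and> real k = (real m - 2) / 2 \<longrightarrow> O2 = alpha i"
            using eviff val by blast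
        qed
      qed
      show ?thesis using A B by blast
    qed
  qed
  show ?thesis using conjI[OF part1 part2] unfolding O1_def O2_def .
qed
end
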